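(* For every $n\ge2$ and all integers $n_a\ge n_b\ge1$ with $n_a+n_b=n$, $$\mathcal{C}(T^{mb}_n)\le \mathcal{C}(T^{mb}_{n_a})+\mathcal{C}(T^{mb}_{n_b})+n_a-n_b.$$
   Context: Bifurcating trees: rooted trees in which every internal node has exactly two children; considered up to isomorphism. For a node $w$ of $T$, $\kappa_T(w)$ is its number of descendant leaves. The Colless index is $\mathcal{C}(T)=\sum_{v}|\kappa_T(v_1)-\kappa_T(v_2)|$, summed over internal nodes $v$ with children $v_1,v_2$. An internal node is balanced if the numbers of descendant leaves of its two children differ by at most 1. A bifurcating tree is maximally balanced if all its internal nodes are balanced; for each $n\ge1$ there is a unique such tree with $n$ leaves, denoted $T^{mb}_n$, and for $n\ge2$ its two subtrees rooted at the children of the root are $T^{mb}_{\lceil n/2\rceil}$ and $T^{mb}_{\lfloor n/2\rfloor}$. *)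

theory Defs
  imports Main
begin

datatype btree = Leaf | Node btree btree

fun kappa :: "btree \<Rightarrow> nat" where
  "kappa Leaf = 1"
| "kappa (Node l r) = kappa l + kappa r"

fun colless :: "btree \<Rightarrow> int" where
  "colless Leaf = 0"
| "colless (Node l r) = \<bar>int (kappa l) - int (kappa r)\<bar> + colless l + colless r"

fun max_balanced :: "btree \<Rightarrow> bool" where
  "max_balanced Leaf = True"
| "max_balanced (Node l r) = (\<bar>int (kappa l) - int (kappa r)\<bar> \<le> 1 \<and> max_balanced l \<and> max_balanced r)"

function mb :: "nat \<Rightarrow> btree" where
  "mb n = (if n \<le> 1 then Leaf else Node (mb ((n + 1) div 2)) (mb (n div 2)))"
  by auto
termination by (relation "measure id") auto

declare mb.simps[simp del]

end

theory Submission
  imports Defs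
begin

lemma kappa_mb: "n \<ge> 1 \<Longrightarrow> kappa (mb n) = n"
proof (induction n rule: mb.induct)
  case (1 n)
  show ?case
  proof (cases "n \<le> 1")
    case True then show ?thesis using 1 by (simp add: mb.simps)
  next
    case False
    then have "kappa (mb ((n+1) div 2)) = (n+1) div 2" "kappa (mb (n div 2)) = n div 2"
      using 1 by auto
    then show ?thesis using False by (subst mb.simps) simp
  qed
qed

definition C :: "nat \<Rightarrow> int" where "C n = colless (mb n)"

lemma C_rec: "n \<ge> 2 \<Longrightarrow> C n = int (n mod 2) + C ((n+1) div 2) + C (n div 2)"
proof -
  assume n: "n \<ge> 2"
  have "kappa (mb ((n+1) div 2)) = (n+1) div 2" "kappa (mb (n div 2)) = n div 2"
    using n by (auto intro: kappa_mb)
  moreover have "\<bar>int ((n+1) div 2) - int (n div 2)\<bar> = int (n mod 2)"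
    by (cases "even n") (auto elim!: evenE oddE)
  ultimately show ?thesis using n unfolding C_def by (subst mb.simps) simp
qed

lemma C_even: "k \<ge> 1 \<Longrightarrow> C (2*k) = 2 * C k"
  using C_rec[of "2*k"] by simp

lemma C_odd: "k \<ge> 1 \<Longrightarrow> C (2*k+1) = 1 + C (k+1) + C k"
  using C_rec[of "2*k+1"] by simp

lemma C1: "C 1 = 0" by (simp add: C_def mb.simps)

lemma main: "\<And>x y. x + y = s \<Longrightarrow> 1 \<le> x \<Longrightarrow> 1 \<le> y \<Longrightarrow>
   C (x+y) \<le> C x + C y + \<bar>int x - int y\<bar>"
proof (induction s rule: less_induct)
  case (less s)
  have key: "C (x+y) \<le> C x + C y + (int x - int y)" if h: "x+y=s" "1\<le>y" "y\<le>x" for x y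
  proof -
    have IH: "C (u+v) \<le> C u + C v + \<bar>int u - int v\<bar>" if "u+v < s" "1 \<le> u" "1 \<le> v" for u v
      using less.IH that by blast
    consider (a) "y = 1" "x = 1" | (b) "y = 1" "x \<ge> 2" | (c) "y \<ge> 2" using h by linarith
    then show ?thesis
    proof cases
      case a then show ?thesis by (simp add: C_def mb.simps)
    next
      case b
      have "x = 2*(x div 2) \<or> x = 2*(x div 2)+1" by auto
      then obtain a' where "x = 2*a' \<or> x = 2*a'+1" by blast
      then show ?thesis
      proof
        assume x: "x = 2*a'"
        then have a1: "a' \<ge> 1" using b by simp
        have "C (a'+1) \<le> C a' + C 1 + \<bar>int a' - 1\<bar>" using IH[of a' 1] a1 x h by simp
        moreover have "C (x+y) = 1 + C (a'+1) + C a'" using C_odd[OF a1] x b by simp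
        moreover have "C x = 2 * C a'" using C_even[OF a1] x by simp
        ultimately show ?thesis using b C1 a1 x by simp
      next
        assume x: "x = 2*a'+1"
        then have a1: "a' \<ge> 1" using b by simp
        have "C (a'+1) \<le> C a' + C 1 + \<bar>int a' - 1\<bar>" using IH[of a' 1] a1 x h by simp
        moreover have "C (x+y) = 2 * C (a'+1)" using C_even[of "a'+1"] x b
          by (simp add: algebra_simps)
        moreover have "C x = 1 + C (a'+1) + C a'" using C_odd[OF a1] x by simp
        ultimately show ?thesis using b C1 a1 x by simp
      qed
    next
      case c
      have "x = 2*(x div 2) \<or> x = 2*(x div 2)+1" by auto
      then obtain a' where xa: "x = 2*a' \<or> x = 2*a'+1" by blast
      have "y = 2*(y div 2) \<or> y = 2*(y div 2)+1" by auto
      then obtain b' where yb: "y = 2*b' \<or> y = 2*b'+1" by blast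
      have b1: "b' \<ge> 1" using c yb by auto
      have a1: "a' \<ge> 1" using c h xa by auto
      show ?thesis
      proof (cases "x = 2*a'")
        case xe: True
        show ?thesis
        proof (cases "y = 2*b'")
          case ye: True
          have "C (a'+b') \<le> C a' + C b' + \<bar>int a' - int b'\<bar>" using IH[of a' b'] a1 b1 xe ye h by simp
          moreover have "C (x+y) = 2 * C (a'+b')" using C_even[of "a'+b'"] xe ye a1
            by (simp add: algebra_simps)
          ultimately show ?thesis using C_even[OF a1] C_even[OF b1] xe ye h by simp
        next
          case yo: False
          then have ye: "y = 2*b'+1" using yb by simp
          have ab: "a' \<ge> b'+1" using xe ye h by simp
          have "C (a'+(b'+1)) \<le> C a' + C (b'+1) + \<bar>int a' - int (b'+1)\<bar>"
            using IH[of a' "b'+1"] a1 b1 xe ye h by simp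
          moreover have "C (a'+b') \<le> C a' + C b' + \<bar>int a' - int b'\<bar>"
            using IH[of a' b'] a1 b1 xe ye h by simp
          moreover have "C (x+y) = 1 + C (a'+b'+1) + C (a'+b')" using C_odd[of "a'+b'"] xe ye a1
            by (simp add: algebra_simps)
          ultimately show ?thesis using C_even[OF a1] C_odd[OF b1] xe ye ab
            by (simp add: algebra_simps)
        qed
      next
        case xo: False
        then have xe: "x = 2*a'+1" using xa by simp
        show ?thesis
        proof (cases "y = 2*b'")
          case ye: True
          have ab: "a' \<ge> b'" using xe ye h by simp
          have "C ((a'+1)+b') \<le> C (a'+1) + C b' + \<bar>int (a'+1) - int b'\<bar>"
            using IH[of "a'+1" b'] a1 b1 xe ye h by simp
          moreover have "C (a'+b') \<le> C a' + C b' + \<bar>int a' - int b'\<bar>"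
            using IH[of a' b'] a1 b1 xe ye h by simp
          moreover have "C (x+y) = 1 + C (a'+b'+1) + C (a'+b')" using C_odd[of "a'+b'"] xe ye a1
            by (simp add: algebra_simps)
          ultimately show ?thesis using C_odd[OF a1] C_even[OF b1] xe ye ab
            by (simp add: algebra_simps)
        next
          case yo: False
          then have ye: "y = 2*b'+1" using yb by simp
          have ab: "a' \<ge> b'" using xe ye h by simp
          have "C ((a'+1)+b') \<le> C (a'+1) + C b' + \<bar>int (a'+1) - int b'\<bar>"
            using IH[of "a'+1" b'] a1 b1 xe ye h by simp
          moreover have "C (a'+(b'+1)) \<le> C a' + C (b'+1) + \<bar>int a' - int (b'+1)\<bar>"
            using IH[of a' "b'+1"] a1 b1 xe ye h by simp
          moreover have "C (x+y) = 2 * C (a'+b'+1)" using C_even[of "a'+b'+1"] xe ye a1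
            by (simp add: algebra_simps)
          ultimately show ?thesis using C_odd[OF a1] C_odd[OF b1] xe ye ab
            by (simp add: algebra_simps)
        qed
      qed
    qed
  qed
  show ?case
  proof (cases "y \<le> x")
    case True then show ?thesis using key[of x y] less.prems by simp
  next
    case False then show ?thesis using key[of y x] less.prems by (simp add: add.commute)
  qed
qed

theorem lemma3:
  fixes n na nb :: nat
  assumes "n \<ge> 2" and "na \<ge> nb" and "nb \<ge> 1" and "na + nb = n"
  shows "colless (mb n) \<le> colless (mb na) + colless (mb nb) + int na - int nb"
  using main[of na nb n] assms unfolding C_def by simp

end
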